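(* Let $A,B,C,D\in\mathcal{B}(\mathcal{H})$. Then for all $r\geq1$, $$w^{r}\left(\begin{bmatrix}A&B\\C&D\end{bmatrix}\right)\leq 4^{r-1}\,w\left(\begin{bmatrix}w^r(A)&\|B\|^r\\ \|C\|^r&w^r(D)\end{bmatrix}\right),$$ where on the right $w$ is the numerical radius of a $2\times2$ complex matrix acting on $\mathbb{C}^2$.
   Context: $\mathcal{H}$ is a complex Hilbert space, $\mathcal{B}(\mathcal{H})$ the bounded linear operators on it, and $w(T)=\sup\{|\langle Tz,z\rangle|:\|z\|=1\}$ the numerical radius (on any Hilbert space). The operator matrix $\begin{bmatrix}A&B\\C&D\end{bmatrix}$ acts on $\mathcal{H}\oplus\mathcal{H}$ by $(x,y)\mapsto(Ax+By,Cx+Dy)$. *)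

theory Defs
  imports "HOL-Analysis.Analysis"
begin

text \<open>The inner product is linear in the
  first argument and conjugate-linear in the second.\<close>

class complex_inner = ab_group_add +
  fixes scaleC :: "complex \<Rightarrow> 'a \<Rightarrow> 'a" (infixr "*\<^sub>C" 75)
    and cinner :: "'a \<Rightarrow> 'a \<Rightarrow> complex"
  assumes scaleC_add_right: "a *\<^sub>C (x + y) = a *\<^sub>C x + a *\<^sub>C y"
    and scaleC_add_left: "(a + b) *\<^sub>C x = a *\<^sub>C x + b *\<^sub>C x"
    and scaleC_scaleC: "a *\<^sub>C (b *\<^sub>C x) = (a * b) *\<^sub>C x"
    and scaleC_one: "1 *\<^sub>C x = x"
    and cinner_add_left: "cinner (x + y) z = cinner x z + cinner y z"
    and cinner_scaleC_left: "cinner (a *\<^sub>C x) y = a * cinner x y"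
    and cinner_commute: "cinner y x = cnj (cinner x y)"
    and cinner_ge_zero: "0 \<le> Re (cinner x x)"
    and cinner_eq_zero_iff: "cinner x x = 0 \<longleftrightarrow> x = 0"

definition cnorm :: "'a::complex_inner \<Rightarrow> real" where
  "cnorm x = sqrt (Re (cinner x x))"

class complex_hilbert = complex_inner +
  assumes complete:
    "(\<forall>e>0. \<exists>N::nat. \<forall>m\<ge>N. \<forall>n\<ge>N. sqrt (Re (cinner (X m - X n) (X m - X n))) < e)
      \<Longrightarrow> \<exists>L. \<forall>e>0. \<exists>N::nat. \<forall>n\<ge>N. sqrt (Re (cinner (X n - L) (X n - L))) < e"

definition bounded_op :: "('a::complex_inner \<Rightarrow> 'a) \<Rightarrow> bool" where
  "bounded_op T \<longleftrightarrow> (\<forall>x y. T (x + y) = T x + T y) \<and> (\<forall>c x. T (c *\<^sub>C x) = c *\<^sub>C T x)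
     \<and> (\<exists>K. \<forall>x. cnorm (T x) \<le> K * cnorm x)"

definition opnorm :: "('a::complex_inner \<Rightarrow> 'a) \<Rightarrow> real" where
  "opnorm T = Sup {cnorm (T x) | x. cnorm x = 1}"

definition numrad :: "('v \<Rightarrow> 'v \<Rightarrow> complex) \<Rightarrow> ('v \<Rightarrow> 'v) \<Rightarrow> real" where
  "numrad ip T = Sup {cmod (ip (T z) z) | z. ip z z = 1}"

definition w :: "('a::complex_inner \<Rightarrow> 'a) \<Rightarrow> real" where
  "w T = numrad cinner T"

definition sum_inner :: "'a::complex_inner \<times> 'a \<Rightarrow> 'a \<times> 'a \<Rightarrow> complex" where
  "sum_inner p q = cinner (fst p) (fst q) + cinner (snd p) (snd q)"

definition opmat :: "('a::complex_inner \<Rightarrow> 'a) \<Rightarrow> ('a \<Rightarrow> 'a) \<Rightarrow> ('a \<Rightarrow> 'a) \<Rightarrow> ('a \<Rightarrow> 'a)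
    \<Rightarrow> 'a \<times> 'a \<Rightarrow> 'a \<times> 'a" where
  "opmat A B C D p = (A (fst p) + B (snd p), C (fst p) + D (snd p))"

definition w2 :: "('a::complex_inner \<times> 'a \<Rightarrow> 'a \<times> 'a) \<Rightarrow> real" where
  "w2 T = numrad sum_inner T"

definition c2_inner :: "complex \<times> complex \<Rightarrow> complex \<times> complex \<Rightarrow> complex" where
  "c2_inner p q = fst p * cnj (fst q) + snd p * cnj (snd q)"

definition cmat2 :: "complex \<Rightarrow> complex \<Rightarrow> complex \<Rightarrow> complex
    \<Rightarrow> complex \<times> complex \<Rightarrow> complex \<times> complex" where
  "cmat2 a b c d p = (a * fst p + b * snd p, c * fst p + d * snd p)"

definition wmat2 :: "complex \<Rightarrow> complex \<Rightarrow> complex \<Rightarrow> complex \<Rightarrow> real" where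
  "wmat2 a b c d = numrad c2_inner (cmat2 a b c d)"

end

theory Submission
  imports Defs
begin

lemma scaleC_zero_left [simp]: "(0::complex) *\<^sub>C (x::'a::complex_inner) = 0"
  using scaleC_add_left[of 0 0 x] by simp

lemma scaleC_zero_right [simp]: "a *\<^sub>C (0::'a::complex_inner) = 0"
  using scaleC_add_right[of a 0 0] by simp

lemma scaleC_minus_left: "(- a) *\<^sub>C (x::'a::complex_inner) = - (a *\<^sub>C x)"
  using scaleC_add_left[of a "-a" x] by (simp add: eq_neg_iff_add_eq_0 add.commute)

lemma cinner_zero_left [simp]: "cinner (0::'a::complex_inner) y = 0"
  using cinner_add_left[of 0 0 y] by simp

lemma cinner_zero_right [simp]: "cinner (y::'a::complex_inner) 0 = 0"
  using cinner_commute[of 0 y] by simp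

lemma cinner_minus_left: "cinner (- x) (y::'a::complex_inner) = - cinner x y"
  using cinner_add_left[of x "-x" y] by (simp add: eq_neg_iff_add_eq_0 add.commute)

lemma cinner_diff_left: "cinner (x - z) (y::'a::complex_inner) = cinner x y - cinner z y"
  using cinner_add_left[of x "-z" y] cinner_minus_left[of z y] by simp

lemma cinner_add_right: "cinner x (y + z) = cinner x y + cinner (x::'a::complex_inner) z"
  using cinner_commute[of x "y+z"] cinner_add_left[of y z x] cinner_commute[of x y] cinner_commute[of x z]
  by simp

lemma cinner_diff_right: "cinner x (y - z) = cinner x y - cinner (x::'a::complex_inner) z"
  using cinner_commute[of x "y-z"] cinner_diff_left[of y z x] cinner_commute[of x y] cinner_commute[of x z]
  by simp

lemma cinner_scaleC_right: "cinner x (a *\<^sub>C y) = cnj a * cinner (x::'a::complex_inner) y"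
  using cinner_commute[of x "a *\<^sub>C y"] cinner_scaleC_left[of a y x] cinner_commute[of x y]
  by simp

lemma cinner_self_real: "cinner x x = complex_of_real (Re (cinner (x::'a::complex_inner) x))"
proof -
  have "cnj (cinner x x) = cinner x x" using cinner_commute[of x x] by simp
  then have "Im (cinner x x) = 0" by (metis Reals_cnj_iff complex_is_Real_iff)
  then show ?thesis by (simp add: complex_eq_iff)
qed

lemma cnorm_ge0: "0 \<le> cnorm x"
  by (simp add: cnorm_def cinner_ge_zero)

lemma mult_cnj_sq: "z * cnj z = (complex_of_real (cmod z))^2"
  using complex_norm_square[of z] by simp

lemma cnorm_sq: "cnorm (x::'a::complex_inner) ^ 2 = Re (cinner x x)"
  by (simp add: cnorm_def cinner_ge_zero)

lemma cinner_self_eq: "cinner x x = complex_of_real (cnorm (x::'a::complex_inner) ^ 2)"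
  using cinner_self_real[of x] cnorm_sq[of x] by simp

lemma cnorm_zero_iff: "cnorm (x::'a::complex_inner) = 0 \<longleftrightarrow> x = 0"
  using cinner_self_eq[of x] cinner_eq_zero_iff[of x] by auto

lemma cnorm_scaleC: "cnorm (a *\<^sub>C (x::'a::complex_inner)) = cmod a * cnorm x"
proof -
  have "cinner (a *\<^sub>C x) (a *\<^sub>C x) = (a * cnj a) * cinner x x"
    by (simp add: cinner_scaleC_left cinner_scaleC_right)
  also have "\<dots> = complex_of_real ((cmod a * cnorm x)^2)"
    by (simp add: cinner_self_eq mult_cnj_sq power_mult_distrib)
  finally have "cnorm (a *\<^sub>C x) ^ 2 = (cmod a * cnorm x)^2"
    using cinner_self_eq[of "a *\<^sub>C x"] by (metis of_real_eq_iff)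
  then show ?thesis using cnorm_ge0[of "a *\<^sub>C x"] cnorm_ge0[of x]
    by (metis norm_ge_zero mult_nonneg_nonneg power2_eq_iff_nonneg)
qed

lemma cauchy_schwarz: "cmod (cinner x y) \<le> cnorm x * cnorm (y::'a::complex_inner)"
proof (cases "y = 0")
  case True then show ?thesis by (simp add: cnorm_def)
next
  case False
  define c where "c = cnorm y ^ 2"
  define g where "g = cinner x y"
  have c0: "c > 0" using False cnorm_zero_iff[of y] cnorm_ge0[of y] unfolding c_def by auto
  define t where "t = g / complex_of_real c"
  have yy: "cinner y y = complex_of_real c" by (simp add: c_def cinner_self_eq)
  have yx: "cinner y x = cnj g" by (simp add: g_def cinner_commute[of x y])
  have "cinner (x - t *\<^sub>C y) (x - t *\<^sub>C y) = cinner x x - cnj t * g - t * cnj g + t * cnj t * complex_of_real c"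
    by (simp add: cinner_diff_left cinner_diff_right cinner_scaleC_left cinner_scaleC_right yy yx g_def algebra_simps)
  also have "\<dots> = cinner x x - complex_of_real (cmod g ^ 2 / c)"
    using c0 by (simp add: t_def field_simps mult_cnj_sq)
  finally have "0 \<le> Re (cinner x x) - cmod g ^ 2 / c"
    using cinner_ge_zero[of "x - t *\<^sub>C y"] by simp
  then have "cmod g ^ 2 \<le> cnorm x ^ 2 * c" using c0 by (simp add: cnorm_sq field_simps)
  then have "cmod g ^ 2 \<le> (cnorm x * cnorm y) ^ 2" by (simp add: c_def power_mult_distrib)
  then show ?thesis unfolding g_def
    by (meson cnorm_ge0 mult_nonneg_nonneg power2_le_imp_le)
qed

lemma cinner_one_iff: "cinner z z = 1 \<longleftrightarrow> cnorm (z::'a::complex_inner) = 1"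
proof -
  have "cinner z z = 1 \<longleftrightarrow> cnorm z ^ 2 = 1"
    by (simp only: cinner_self_eq of_real_eq_1_iff)
  also have "\<dots> \<longleftrightarrow> cnorm z = 1" using cnorm_ge0[of z]
    by (auto simp: power2_eq_1_iff)
  finally show ?thesis .
qed

lemma unit_decomp:
  assumes "(x::'a::complex_inner) \<noteq> 0"
  shows "cnorm (complex_of_real (1 / cnorm x) *\<^sub>C x) = 1"
    and "x = complex_of_real (cnorm x) *\<^sub>C (complex_of_real (1 / cnorm x) *\<^sub>C x)"
proof -
  have n: "cnorm x > 0" using assms cnorm_zero_iff[of x] cnorm_ge0[of x] by auto
  show "cnorm (complex_of_real (1 / cnorm x) *\<^sub>C x) = 1"
    using n by (simp add: cnorm_scaleC norm_divide)
  show "x = complex_of_real (cnorm x) *\<^sub>C (complex_of_real (1 / cnorm x) *\<^sub>C x)"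
    using n by (simp add: scaleC_scaleC flip: of_real_mult add: scaleC_one)
qed

lemma cnorm_zero [simp]: "cnorm (0::'a::complex_inner) = 0"
  by (simp add: cnorm_zero_iff)

lemma bop_zero: "bounded_op T \<Longrightarrow> T 0 = 0"
proof -
  assume "bounded_op T"
  then have "T (0 + 0) = T 0 + T 0" unfolding bounded_op_def by blast
  then show "T 0 = 0" by simp
qed

lemma bop_scale: "bounded_op T \<Longrightarrow> T (c *\<^sub>C x) = c *\<^sub>C T x"
  unfolding bounded_op_def by blast

lemma opnorm_bdd: "bounded_op (T::'a::complex_inner \<Rightarrow> 'a) \<Longrightarrow> bdd_above {cnorm (T x) | x. cnorm x = 1}"
  unfolding bounded_op_def
proof (elim conjE exE)
  fix K assume "\<forall>x. cnorm (T x) \<le> K * cnorm x"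
  then show "bdd_above {cnorm (T x) | x. cnorm x = 1}"
  proof (intro bdd_aboveI[where M=K])
    fix y assume "y \<in> {cnorm (T x) | x. cnorm x = 1}"
    then obtain x where "y = cnorm (T x)" "cnorm x = 1" by blast
    then show "y \<le> K" using \<open>\<forall>x. cnorm (T x) \<le> K * cnorm x\<close> by (metis mult.right_neutral)
  qed
qed

lemma opnorm_bound:
  assumes "bounded_op (T::'a::complex_inner \<Rightarrow> 'a)"
  shows "cnorm (T x) \<le> opnorm T * cnorm x"
proof (cases "x = 0")
  case True then show ?thesis using bop_zero[OF assms] cnorm_zero_iff by simp
next
  case False
  define u where "u = complex_of_real (1 / cnorm x) *\<^sub>C x"
  have u1: "cnorm u = 1" and xu: "x = complex_of_real (cnorm x) *\<^sub>C u"
    using unit_decomp[OF False] u_def by auto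
  have "cnorm (T u) \<le> opnorm T" unfolding opnorm_def
    using opnorm_bdd[OF assms] u1 by (intro cSup_upper) auto
  moreover have "cnorm (T x) = cnorm x * cnorm (T u)"
    by (subst xu, simp add: bop_scale[OF assms] cnorm_scaleC cnorm_ge0)
  ultimately show ?thesis using cnorm_ge0[of x] by (simp add: mult_left_mono mult.commute)
qed

lemma opnorm_nonneg:
  assumes "bounded_op (T::'a::complex_inner \<Rightarrow> 'a)" "\<exists>x::'a. x \<noteq> 0"
  shows "0 \<le> opnorm T"
proof -
  obtain x :: 'a where "x \<noteq> 0" using assms(2) by blast
  then have "cnorm (complex_of_real (1 / cnorm x) *\<^sub>C x) = 1" by (rule unit_decomp)
  then have "cnorm (T (complex_of_real (1 / cnorm x) *\<^sub>C x)) \<le> opnorm T" unfolding opnorm_def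
    using opnorm_bdd[OF assms(1)] by (intro cSup_upper) auto
  then show ?thesis using cnorm_ge0[of "T (complex_of_real (1 / cnorm x) *\<^sub>C x)"] by linarith
qed

lemma w_bdd:
  assumes "bounded_op (T::'a::complex_inner \<Rightarrow> 'a)"
  shows "bdd_above {cmod (cinner (T z) z) | z. cinner z z = 1}"
proof (rule bdd_aboveI[where M="opnorm T"], clarsimp)
  fix z :: 'a assume "cinner z z = 1"
  then have z1: "cnorm z = 1" by (simp add: cinner_one_iff)
  have "cmod (cinner (T z) z) \<le> cnorm (T z) * cnorm z" by (rule cauchy_schwarz)
  also have "\<dots> \<le> opnorm T" using opnorm_bound[OF assms, of z] z1 by simp
  finally show "cmod (cinner (T z) z) \<le> opnorm T" .
qed

lemma w_bound:
  assumes "bounded_op (T::'a::complex_inner \<Rightarrow> 'a)"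
  shows "cmod (cinner (T x) x) \<le> w T * cnorm x ^ 2"
proof (cases "x = 0")
  case True then show ?thesis using bop_zero[OF assms] cnorm_zero_iff by simp
next
  case False
  define u where "u = complex_of_real (1 / cnorm x) *\<^sub>C x"
  have u1: "cnorm u = 1" and xu: "x = complex_of_real (cnorm x) *\<^sub>C u"
    using unit_decomp[OF False] u_def by auto
  have "cmod (cinner (T u) u) \<le> w T" unfolding w_def numrad_def
    using w_bdd[OF assms] u1 by (intro cSup_upper) (auto simp: cinner_one_iff)
  moreover have "cmod (cinner (T x) x) = cnorm x ^ 2 * cmod (cinner (T u) u)"
  proof -
    obtain n where n: "n = cnorm x" by blast
    have xn: "x = complex_of_real n *\<^sub>C u" using xu n by simp
    have "cinner (T x) x = cinner (complex_of_real n *\<^sub>C T u) (complex_of_real n *\<^sub>C u)"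
      using xn bop_scale[OF assms] by metis
    also have "\<dots> = complex_of_real (n * n) * cinner (T u) u"
      by (simp add: cinner_scaleC_left cinner_scaleC_right)
    finally show ?thesis using n cnorm_ge0[of x] by (simp add: norm_mult power2_eq_square)
  qed
  ultimately show ?thesis by (simp add: mult.commute[of "w T"] mult_left_mono)
qed

lemma w_nonneg:
  assumes "bounded_op (T::'a::complex_inner \<Rightarrow> 'a)" "\<exists>x::'a. x \<noteq> 0"
  shows "0 \<le> w T"
proof -
  obtain x :: 'a where "x \<noteq> 0" using assms(2) by blast
  then have "cnorm (complex_of_real (1 / cnorm x) *\<^sub>C x) = 1" by (rule unit_decomp)
  then have "cmod (cinner (T (complex_of_real (1 / cnorm x) *\<^sub>C x)) (complex_of_real (1 / cnorm x) *\<^sub>C x)) \<le> w T"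
    unfolding w_def numrad_def
    using w_bdd[OF assms(1)] by (intro cSup_upper) (auto simp: cinner_one_iff)
  then show ?thesis
    using norm_ge_zero[of "cinner (T (complex_of_real (1 / cnorm x) *\<^sub>C x)) (complex_of_real (1 / cnorm x) *\<^sub>C x)"]
    by linarith
qed

lemma powr_two_mean:
  fixes a b r :: real
  assumes a: "0 \<le> a" and b: "0 \<le> b" and r: "1 \<le> r"
  shows "(a + b) powr r \<le> 2 powr (r - 1) * (a powr r + b powr r)"
proof -
  have g1: "1 \<le> (2::real) powr (r - 1)" using r by (simp add: ge_one_powr_ge_zero)
  have p2: "(2::real) powr r = 2 * 2 powr (r - 1)"
    by (simp add: powr_diff)
  show ?thesis
  proof (cases "a = 0 \<or> b = 0")
    case True
    then show ?thesis
    proof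
      assume "a = 0"
      then show ?thesis using g1 b by (simp add: mult_le_cancel_right1 powr_ge_zero)
    next
      assume "b = 0"
      then show ?thesis using g1 a by (simp add: mult_le_cancel_right1 powr_ge_zero)
    qed
  next
    case False
    then have "a \<in> {0<..}" "b \<in> {0<..}" using a b by auto
    from convex_onD[OF powr_convex[OF r], of "1/2", OF _ _ this]
    have "((a + b) / 2) powr r \<le> (a powr r + b powr r) / 2"
      by (simp add: field_simps)
    then have "(a + b) powr r / 2 powr r \<le> (a powr r + b powr r) / 2"
      using a b by (simp add: powr_divide)
    then show ?thesis unfolding p2 by (simp add: field_simps)
  qed
qed

lemma powr_four_mean:
  fixes a b c d r :: real
  assumes "0 \<le> a" "0 \<le> b" "0 \<le> c" "0 \<le> d" and r: "1 \<le> r"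
  shows "(a + b + c + d) powr r \<le> 4 powr (r - 1) * (a powr r + b powr r + c powr r + d powr r)"
proof -
  have "(a + b + c + d) powr r = ((a + b) + (c + d)) powr r" by (simp add: add.assoc)
  also have "\<dots> \<le> 2 powr (r - 1) * ((a + b) powr r + (c + d) powr r)"
    using assms by (intro powr_two_mean) auto
  also have "\<dots> \<le> 2 powr (r - 1) * (2 powr (r - 1) * (a powr r + b powr r) + 2 powr (r - 1) * (c powr r + d powr r))"
    using assms by (intro mult_left_mono add_mono powr_two_mean) auto
  also have "\<dots> = 4 powr (r - 1) * (a powr r + b powr r + c powr r + d powr r)"
  proof -
    have "(4::real) powr (r - 1) = 2 powr (r - 1) * 2 powr (r - 1)"
      using powr_mult[of 2 2 "r - 1"] by simp
    then show ?thesis by (simp add: algebra_simps)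
  qed
  finally show ?thesis .
qed

lemma c2_inner_self: "c2_inner u u = complex_of_real (cmod (fst u) ^ 2 + cmod (snd u) ^ 2)"
  by (simp add: c2_inner_def mult_cnj_sq)

lemma wmat2_bdd: "bdd_above {cmod (c2_inner (cmat2 a b c d u) u) | u. c2_inner u u = 1}"
proof (intro bdd_aboveI[where M="cmod a + cmod b + cmod c + cmod d"])
  fix y assume "y \<in> {cmod (c2_inner (cmat2 a b c d u) u) | u. c2_inner u u = 1}"
  then obtain u where y: "y = cmod (c2_inner (cmat2 a b c d u) u)" and u: "c2_inner u u = 1" by blast
  obtain u1 u2 where uu: "u = (u1, u2)" by force
  have s: "cmod u1 ^ 2 + cmod u2 ^ 2 = 1" using u uu c2_inner_self[of u]
    by (metis fst_conv snd_conv of_real_eq_1_iff)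
  have h1: "cmod u1 \<le> 1" using s
    by (smt (verit) norm_ge_zero power2_le_imp_le zero_le_power2 one_power2)
  have h2: "cmod u2 \<le> 1" using s
    by (smt (verit) norm_ge_zero power2_le_imp_le zero_le_power2 one_power2)
  have e: "c2_inner (cmat2 a b c d u) u = a * (u1 * cnj u1) + b * (u2 * cnj u1) + c * (u1 * cnj u2) + d * (u2 * cnj u2)"
    by (simp add: uu c2_inner_def cmat2_def algebra_simps)
  have m: "\<And>k v v'. cmod v \<le> 1 \<Longrightarrow> cmod v' \<le> 1 \<Longrightarrow> cmod (k * (v * cnj v')) \<le> cmod k"
  proof -
    fix k v v' :: complex assume "cmod v \<le> 1" "cmod v' \<le> 1"
    then have "cmod v * cmod v' \<le> 1" by (simp add: mult_le_one)
    then show "cmod (k * (v * cnj v')) \<le> cmod k"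
      by (simp add: norm_mult mult_left_le)
  qed
  have "y \<le> cmod (a * (u1 * cnj u1)) + cmod (b * (u2 * cnj u1)) + cmod (c * (u1 * cnj u2)) + cmod (d * (u2 * cnj u2))"
    unfolding y e by (meson norm_triangle_ineq order_trans add_mono order_refl)
  also have "\<dots> \<le> cmod a + cmod b + cmod c + cmod d"
    using h1 h2 by (intro add_mono m) auto
  finally show "y \<le> cmod a + cmod b + cmod c + cmod d" .
qed

lemma wmat2_nonneg: "0 \<le> wmat2 a b c d"
proof -
  have mem: "cmod (c2_inner (cmat2 a b c d (1, 0)) (1, 0)) \<in> {cmod (c2_inner (cmat2 a b c d u) u) | u. c2_inner u u = 1}"
    by (intro CollectI exI[of _ "(1::complex, 0::complex)"]) (simp add: c2_inner_def)
  have "cmod (c2_inner (cmat2 a b c d (1, 0)) (1, 0)) \<le> wmat2 a b c d"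
    unfolding wmat2_def numrad_def by (rule cSup_upper[OF mem wmat2_bdd])
  then show ?thesis using norm_ge_zero[of "c2_inner (cmat2 a b c d (1, 0)) (1, 0)"] by linarith
qed

lemma wmat2_ge:
  fixes \<alpha> \<beta> \<gamma> \<delta> p q :: real
  assumes "0 \<le> \<alpha>" "0 \<le> \<beta>" "0 \<le> \<gamma>" "0 \<le> \<delta>" "0 \<le> p" "0 \<le> q" and pq: "p^2 + q^2 \<le> 1"
  shows "\<alpha> * p^2 + \<beta> * p * q + \<gamma> * p * q + \<delta> * q^2
     \<le> wmat2 (complex_of_real \<alpha>) (complex_of_real \<beta>) (complex_of_real \<gamma>) (complex_of_real \<delta>)"
    (is "?v \<le> ?W")
proof (cases "p^2 + q^2 = 0")
  case True
  then have "p = 0" "q = 0" using assms by (auto simp: add_nonneg_eq_0_iff)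
  then show ?thesis using wmat2_nonneg by simp
next
  case False
  define s where "s = p^2 + q^2"
  have s0: "s > 0" using False s_def by (simp add: add_pos_nonneg sum_power2_gt_zero_iff)
  define t where "t = sqrt s"
  have t0: "t > 0" using s0 t_def by simp
  have tt: "t * t = s" using s0 t_def by simp
  define v where "v = (complex_of_real (p / t), complex_of_real (q / t))"
  have "(p/t)*(p/t) + (q/t)*(q/t) = (p*p+q*q)/(t*t)" using t0 by (simp add: field_simps)
  also have "\<dots> = 1" using tt s0 s_def by (metis power2_eq_square divide_self less_irrefl)
  finally have r1: "(p/t)*(p/t) + (q/t)*(q/t) = 1" .
  have "c2_inner v v = complex_of_real ((p/t)*(p/t) + (q/t)*(q/t))"
    by (simp add: v_def c2_inner_def)
  then have v1: "c2_inner v v = 1" by (simp only: r1 of_real_1)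
  have r2: "\<alpha>*((p/t)*(p/t)) + \<beta>*((q/t)*(p/t)) + \<gamma>*((p/t)*(q/t)) + \<delta>*((q/t)*(q/t)) = ?v / s"
    using tt t0 s0 by (simp add: field_simps power2_eq_square)
  have "c2_inner (cmat2 (complex_of_real \<alpha>) (complex_of_real \<beta>) (complex_of_real \<gamma>) (complex_of_real \<delta>) v) v
      = complex_of_real (\<alpha>*((p/t)*(p/t)) + \<beta>*((q/t)*(p/t)) + \<gamma>*((p/t)*(q/t)) + \<delta>*((q/t)*(q/t)))"
    by (simp add: v_def c2_inner_def cmat2_def algebra_simps)
  then have "c2_inner (cmat2 (complex_of_real \<alpha>) (complex_of_real \<beta>) (complex_of_real \<gamma>) (complex_of_real \<delta>) v) v
      = complex_of_real (?v / s)" by (simp only: r2)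
  then have "cmod (c2_inner (cmat2 (complex_of_real \<alpha>) (complex_of_real \<beta>) (complex_of_real \<gamma>) (complex_of_real \<delta>) v) v) = \<bar>?v / s\<bar>"
    by (simp only: norm_of_real)
  moreover have "?v \<ge> 0" using assms by simp
  ultimately have "cmod (c2_inner (cmat2 (complex_of_real \<alpha>) (complex_of_real \<beta>) (complex_of_real \<gamma>) (complex_of_real \<delta>) v) v) = ?v / s"
    using s0 by simp
  moreover have "cmod (c2_inner (cmat2 (complex_of_real \<alpha>) (complex_of_real \<beta>) (complex_of_real \<gamma>) (complex_of_real \<delta>) v) v) \<le> ?W"
    unfolding wmat2_def numrad_def using v1 by (intro cSup_upper[OF _ wmat2_bdd]) blast
  ultimately have "?v / s \<le> ?W" by linarith
  then have "?v \<le> s * ?W" using s0 by (simp add: pos_divide_le_eq mult.commute)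
  also have "\<dots> \<le> ?W" using wmat2_nonneg pq s_def by (simp add: mult_left_le_one_le)
  finally show ?thesis .
qed

lemma powr_le_self: "0 \<le> (a::real) \<Longrightarrow> a \<le> 1 \<Longrightarrow> 1 \<le> r \<Longrightarrow> a powr r \<le> a"
  by (cases "a = 0") (auto simp: powr_le_one_le)

lemma pointwise:
  fixes A B C D :: "'a::complex_inner \<Rightarrow> 'a" and r :: real
  assumes "\<exists>x::'a. x \<noteq> 0"
    and bA: "bounded_op A" and bB: "bounded_op B" and bC: "bounded_op C" and bD: "bounded_op D"
    and r: "r \<ge> 1"
    and z: "sum_inner z z = 1"
  shows "cmod (sum_inner (opmat A B C D z) z) powr r
    \<le> 4 powr (r - 1) * wmat2 (complex_of_real (w A powr r)) (complex_of_real (opnorm B powr r))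
                             (complex_of_real (opnorm C powr r)) (complex_of_real (w D powr r))"
proof -
  obtain x y where zxy: "z = (x, y)" by force
  define a where "a = cnorm x"
  define b where "b = cnorm y"
  have a0: "0 \<le> a" and b0: "0 \<le> b" using cnorm_ge0 a_def b_def by auto
  have "complex_of_real (a^2 + b^2) = 1" using z zxy
    by (simp add: sum_inner_def cinner_self_eq a_def b_def)
  then have ab1: "a^2 + b^2 = 1" by (simp only: of_real_eq_1_iff)
  have a1: "a \<le> 1" using ab1 a0 b0
    by (smt (verit) power2_le_imp_le zero_le_power2 one_power2)
  have b1: "b \<le> 1" using ab1 a0 b0
    by (smt (verit) power2_le_imp_le zero_le_power2 one_power2)
  have wA: "0 \<le> w A" by (rule w_nonneg[OF bA assms(1)])
  have wD: "0 \<le> w D" by (rule w_nonneg[OF bD assms(1)])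
  have nB: "0 \<le> opnorm B" by (rule opnorm_nonneg[OF bB assms(1)])
  have nC: "0 \<le> opnorm C" by (rule opnorm_nonneg[OF bC assms(1)])
  define m where "m = cmod (sum_inner (opmat A B C D z) z)"
  have m0: "0 \<le> m" unfolding m_def by simp
  have e: "sum_inner (opmat A B C D z) z = cinner (A x) x + cinner (B y) x + cinner (C x) y + cinner (D y) y"
    by (simp add: zxy sum_inner_def opmat_def cinner_add_left)
  have t1: "cmod (cinner (A x) x) \<le> w A * (a * a)"
    using w_bound[OF bA, of x] by (simp add: a_def power2_eq_square)
  have t2: "cmod (cinner (B y) x) \<le> opnorm B * a * b"
  proof -
    have "cmod (cinner (B y) x) \<le> cnorm (B y) * a" unfolding a_def by (rule cauchy_schwarz)
    also have "\<dots> \<le> opnorm B * b * a" using opnorm_bound[OF bB, of y] a0 b_def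
      by (simp add: mult_right_mono)
    finally show ?thesis by (simp add: algebra_simps)
  qed
  have t3: "cmod (cinner (C x) y) \<le> opnorm C * a * b"
  proof -
    have "cmod (cinner (C x) y) \<le> cnorm (C x) * b" unfolding b_def by (rule cauchy_schwarz)
    also have "\<dots> \<le> opnorm C * a * b" using opnorm_bound[OF bC, of x] b0 a_def
      by (simp add: mult_right_mono)
    finally show ?thesis .
  qed
  have t4: "cmod (cinner (D y) y) \<le> w D * (b * b)"
    using w_bound[OF bD, of y] by (simp add: b_def power2_eq_square)
  have "m \<le> cmod (cinner (A x) x) + cmod (cinner (B y) x) + cmod (cinner (C x) y) + cmod (cinner (D y) y)"
    unfolding m_def e by (meson norm_triangle_ineq order_trans add_mono order_refl)
  also have "\<dots> \<le> w A * (a * a) + opnorm B * a * b + opnorm C * a * b + w D * (b * b)"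
    using t1 t2 t3 t4 by linarith
  finally have mle: "m \<le> w A * (a * a) + opnorm B * a * b + opnorm C * a * b + w D * (b * b)" .
  have "m powr r \<le> (w A * (a * a) + opnorm B * a * b + opnorm C * a * b + w D * (b * b)) powr r"
    using mle m0 r by (intro powr_mono2) auto
  also have "\<dots> \<le> 4 powr (r - 1) * ((w A * (a * a)) powr r + (opnorm B * a * b) powr r
       + (opnorm C * a * b) powr r + (w D * (b * b)) powr r)"
    using wA wD nB nC a0 b0 r by (intro powr_four_mean) auto
  also have "((w A * (a * a)) powr r + (opnorm B * a * b) powr r
       + (opnorm C * a * b) powr r + (w D * (b * b)) powr r)
     = w A powr r * (a powr r)^2 + opnorm B powr r * a powr r * b powr r
       + opnorm C powr r * a powr r * b powr r + w D powr r * (b powr r)^2"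
    using wA wD nB nC a0 b0 by (simp add: powr_mult power2_eq_square)
  also have "w A powr r * (a powr r)^2 + opnorm B powr r * a powr r * b powr r
       + opnorm C powr r * a powr r * b powr r + w D powr r * (b powr r)^2
     \<le> wmat2 (complex_of_real (w A powr r)) (complex_of_real (opnorm B powr r))
             (complex_of_real (opnorm C powr r)) (complex_of_real (w D powr r))"
  proof (rule wmat2_ge)
    have "a powr r \<le> a" "b powr r \<le> b" using powr_le_self a0 a1 b0 b1 r by auto
    then have "(a powr r)^2 \<le> a^2" "(b powr r)^2 \<le> b^2" by (auto intro: power_mono)
    then show "(a powr r)^2 + (b powr r)^2 \<le> 1" using ab1 by linarith
  qed auto
  finally show ?thesis unfolding m_def by simp
qed

theorem theorem4p2:
  fixes A B C D :: "'a::complex_hilbert \<Rightarrow> 'a" and r :: real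
  assumes "\<exists>x::'a. x \<noteq> 0"
    and "bounded_op A" and "bounded_op B" and "bounded_op C" and "bounded_op D"
    and "r \<ge> 1"
  shows "w2 (opmat A B C D) powr r
    \<le> 4 powr (r - 1) * wmat2 (complex_of_real (w A powr r)) (complex_of_real (opnorm B powr r))
                             (complex_of_real (opnorm C powr r)) (complex_of_real (w D powr r))"
proof -
  define K where "K = 4 powr (r - 1) * wmat2 (complex_of_real (w A powr r)) (complex_of_real (opnorm B powr r))
                             (complex_of_real (opnorm C powr r)) (complex_of_real (w D powr r))"
  have K0: "0 \<le> K" unfolding K_def using wmat2_nonneg by simp
  have r0: "0 < r" using assms(6) by simp
  define S where "S = {cmod (sum_inner (opmat A B C D z) z) | z. sum_inner z z = 1}"
  have bnd: "m \<le> K powr (1 / r)" if mS: "m \<in> S" for m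
  proof -
    obtain z where m: "m = cmod (sum_inner (opmat A B C D z) z)" and z: "sum_inner z z = 1"
      using mS S_def by blast
    have "m powr r \<le> K" unfolding m K_def by (rule pointwise[OF assms z])
    then have "(m powr r) powr (1 / r) \<le> K powr (1 / r)"
      using r0 by (intro powr_mono2) auto
    moreover have "(m powr r) powr (1 / r) = m"
      using r0 m by (simp add: powr_powr)
    ultimately show ?thesis by simp
  qed
  obtain x :: 'a where x: "x \<noteq> 0" using assms(1) by blast
  define u where "u = complex_of_real (1 / cnorm x) *\<^sub>C x"
  have "cnorm u = 1" unfolding u_def by (rule unit_decomp[OF x])
  then have "sum_inner (u, 0) (u, 0) = 1" by (simp add: sum_inner_def cinner_one_iff)
  then have mem: "cmod (sum_inner (opmat A B C D (u, 0)) (u, 0)) \<in> S" unfolding S_def by blast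
  have bdd: "bdd_above S" using bnd by (intro bdd_aboveI) auto
  have "w2 (opmat A B C D) = Sup S" unfolding w2_def numrad_def S_def by simp
  then have wle: "w2 (opmat A B C D) \<le> K powr (1 / r)" and wge: "0 \<le> w2 (opmat A B C D)"
    using cSup_least[of S, OF _ bnd] mem cSup_upper[OF mem bdd]
    by (auto intro: order_trans[OF norm_ge_zero])
  have "w2 (opmat A B C D) powr r \<le> (K powr (1 / r)) powr r"
    using wle wge r0 by (intro powr_mono2) auto
  also have "\<dots> = K" using r0 K0 by (simp add: powr_powr)
  finally show ?thesis unfolding K_def .
qed

end
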